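(* Let $A$ be a densely defined closed operator in a complex Hilbert space $\mathcal{H}$ with $\operatorname{D}(A)\subset\operatorname{D}(A^* )$ and $\operatorname{Num}(A)\subset\{z:\operatorname{Im} z\ge 0\}$. Assume that for every sequence $a_n>0$ with $a_n\to0$ one has $K(a_n)\to\infty$, where $$K(a)=\inf\Big\{\tfrac{\operatorname{Im}\langle Av,v\rangle}{(\operatorname{Re}\langle Av,v\rangle)^2}: v\in\operatorname{D}(A),\|v\|=1,\ 0<|\langle Av,v\rangle|<a,\ \operatorname{Re}\langle Av,v\rangle>0\Big\}.$$ Let $\alpha\in\operatorname{Num}(A)$ with $0<\operatorname{Re}\alpha<1$, $0<\operatorname{Im}\alpha<1$, $|\alpha|<1$ and $(0,\alpha]\subset\operatorname{Num}(A)$, let $(\varepsilon_n)\subset(0,1)$ with $\varepsilon_n\to0$, and let $(u_n)\subset\operatorname{D}(A)$ with $\|u_n\|=1$ and $\langle Au_n,u_n\rangle=\varepsilon_n\alpha$. Let $(f_n)\subset\operatorname{D}(A)$ satisfy $\max(\sup_n\|f_n\|,\sup_n\|Af_n\|,\sup_n\|A^*f_n\|)<\infty$. Then $$\lim_{n\to\infty}\big(|\langle f_n,Au_n\rangle|+|\langle f_n,A^*u_n\rangle|\big)=0.$$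
   Context: $\operatorname{Num}(A)=\{\langle Af,f\rangle: f\in\operatorname{D}(A),\|f\|=1\}$; $(0,\alpha]$ denotes the half-open segment $\{t\alpha: 0<t\le1\}$. The infimum of the empty set is $+\infty$. *)

theory Defs
  imports "HOL-Analysis.Analysis"
begin

class complex_vector = real_vector +
  fixes scaleC :: "complex \<Rightarrow> 'a \<Rightarrow> 'a"
  assumes scaleC_add_right: "scaleC a (x + y) = scaleC a x + scaleC a y"
    and scaleC_add_left: "scaleC (a + b) x = scaleC a x + scaleC b x"
    and scaleC_scaleC: "scaleC a (scaleC b x) = scaleC (a * b) x"
    and scaleC_one: "scaleC 1 x = x"
    and scaleR_scaleC: "scaleR r x = scaleC (complex_of_real r) x"

text \<open>Complex inner product spaces; the inner product is linear in the first
  argument and conjugate-linear in the second; the norm is induced by it.\<close>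
class complex_inner = complex_vector + real_normed_vector +
  fixes cinner :: "'a \<Rightarrow> 'a \<Rightarrow> complex"
  assumes cinner_commute: "cinner x y = cnj (cinner y x)"
    and cinner_add_left: "cinner (x + y) z = cinner x z + cinner y z"
    and cinner_scaleC_left: "cinner (scaleC c x) y = c * cinner x y"
    and cinner_self_real_nonneg: "Im (cinner x x) = 0 \<and> 0 \<le> Re (cinner x x)"
    and cinner_eq_zero_iff: "cinner x x = 0 \<longleftrightarrow> x = 0"
    and norm_eq_sqrt_cinner: "norm x = sqrt (Re (cinner x x))"

class chilbert_space = complex_inner + complete_space

text \<open>An operator is a pair of a domain D and a map A (only its values on D matter).\<close>

definition is_subspace :: "'a::complex_vector set \<Rightarrow> bool" where
  "is_subspace D \<longleftrightarrow> 0 \<in> D \<and> (\<forall>x\<in>D. \<forall>y\<in>D. x + y \<in> D) \<and> (\<forall>c. \<forall>x\<in>D. scaleC c x \<in> D)"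

definition linear_on :: "'a::complex_vector set \<Rightarrow> ('a \<Rightarrow> 'a) \<Rightarrow> bool" where
  "linear_on D A \<longleftrightarrow> (\<forall>x\<in>D. \<forall>y\<in>D. A (x + y) = A x + A y) \<and>
                      (\<forall>c. \<forall>x\<in>D. A (scaleC c x) = scaleC c (A x))"

definition densely_defined :: "'a::chilbert_space set \<Rightarrow> ('a \<Rightarrow> 'a) \<Rightarrow> bool" where
  "densely_defined D A \<longleftrightarrow> is_subspace D \<and> linear_on D A \<and> closure D = UNIV"

definition closed_operator :: "'a::chilbert_space set \<Rightarrow> ('a \<Rightarrow> 'a) \<Rightarrow> bool" where
  "closed_operator D A \<longleftrightarrow>
     (\<forall>x y. \<forall>s::nat \<Rightarrow> 'a. (\<forall>n. s n \<in> D) \<longrightarrow> s \<longlonglongrightarrow> x \<longrightarrow> (\<lambda>n. A (s n)) \<longlonglongrightarrow> y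
        \<longrightarrow> x \<in> D \<and> A x = y)"

definition adj_dom :: "'a::chilbert_space set \<Rightarrow> ('a \<Rightarrow> 'a) \<Rightarrow> 'a set" where
  "adj_dom D A = {y. \<exists>z. \<forall>x\<in>D. cinner (A x) y = cinner x z}"

definition adj :: "'a::chilbert_space set \<Rightarrow> ('a \<Rightarrow> 'a) \<Rightarrow> 'a \<Rightarrow> 'a" where
  "adj D A y = (THE z. \<forall>x\<in>D. cinner (A x) y = cinner x z)"

definition Num :: "'a::chilbert_space set \<Rightarrow> ('a \<Rightarrow> 'a) \<Rightarrow> complex set" where
  "Num D A = {cinner (A f) f | f. f \<in> D \<and> norm f = 1}"

text \<open>The quantity K(a); the infimum of the empty set is +\<infinity> (taken in ereal).\<close>
definition Kfun :: "'a::chilbert_space set \<Rightarrow> ('a \<Rightarrow> 'a) \<Rightarrow> real \<Rightarrow> ereal" where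
  "Kfun D A a = Inf (ereal ` {Im (cinner (A v) v) / (Re (cinner (A v) v))\<^sup>2 | v.
      v \<in> D \<and> norm v = 1 \<and> 0 < cmod (cinner (A v) v) \<and> cmod (cinner (A v) v) < a
      \<and> Re (cinner (A v) v) > 0})"

end

theory Submission
  imports Defs
begin


lemma cinner_add_right: "cinner x (y + z) = cinner x y + cinner (x::'a::complex_inner) z"
proof -
  have "cinner x (y + z) = cnj (cinner (y + z) x)" by (rule cinner_commute)
  also have "\<dots> = cnj (cinner y x) + cnj (cinner z x)" by (simp add: cinner_add_left)
  also have "\<dots> = cinner x y + cinner x z" by (simp only: cinner_commute[of x y, symmetric] cinner_commute[of x z, symmetric])
  finally show ?thesis .
qed

lemma cinner_scaleC_right: "cinner x (scaleC c y) = cnj c * cinner (x::'a::complex_inner) y"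
proof -
  have "cinner x (scaleC c y) = cnj (cinner (scaleC c y) x)" by (rule cinner_commute)
  also have "\<dots> = cnj c * cnj (cinner y x)" by (simp add: cinner_scaleC_left)
  also have "\<dots> = cnj c * cinner x y" by (simp only: cinner_commute[of x y, symmetric])
  finally show ?thesis .
qed

lemma cinner_zero_left[simp]: "cinner 0 (y::'a::complex_inner) = 0"
  using cinner_add_left[of 0 0 y] by simp

lemma cinner_zero_right[simp]: "cinner (y::'a::complex_inner) 0 = 0"
  using cinner_add_right[of y 0 0] by simp

lemma scaleC_minus1: "scaleC (-1) (x::'a::complex_vector) = - x"
proof -
  have "scaleC (-1) x = scaleC (complex_of_real (-1)) x" by simp
  also have "\<dots> = scaleR (-1) x" by (simp only: scaleR_scaleC)
  also have "\<dots> = - x" by simp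
  finally show ?thesis .
qed

lemma cinner_minus_left: "cinner (- x) y = - cinner (x::'a::complex_inner) y"
proof -
  have "cinner (- x) y = cinner (scaleC (-1) x) y" by (simp only: scaleC_minus1)
  also have "\<dots> = - cinner x y" by (simp only: cinner_scaleC_left) simp
  finally show ?thesis .
qed

lemma cinner_diff_left: "cinner (x - z) y = cinner x y - cinner (z::'a::complex_inner) y"
proof -
  have "cinner (x - z) y = cinner (x + (- z)) y" by (simp only: diff_conv_add_uminus)
  also have "\<dots> = cinner x y + cinner (- z) y" by (rule cinner_add_left)
  also have "\<dots> = cinner x y - cinner z y" by (simp only: cinner_minus_left) simp
  finally show ?thesis .
qed

lemma cinner_diff_right: "cinner y (x - z) = cinner y x - cinner (y::'a::complex_inner) z"
proof -
  have "cinner y (x - z) = cnj (cinner (x - z) y)" by (rule cinner_commute)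
  also have "\<dots> = cnj (cinner x y) - cnj (cinner z y)" by (simp add: cinner_diff_left)
  also have "\<dots> = cinner y x - cinner y z" by (simp only: cinner_commute[of y x, symmetric] cinner_commute[of y z, symmetric])
  finally show ?thesis .
qed

lemma cinner_self: "cinner x x = complex_of_real (norm (x::'a::complex_inner) ^ 2)"
proof -
  have "Im (cinner x x) = 0" "0 \<le> Re (cinner x x)" using cinner_self_real_nonneg by auto
  then show ?thesis by (simp add: norm_eq_sqrt_cinner complex_eq_iff)
qed

lemma expand2: "cinner (a + scaleC s b) (c + scaleC s d) =
   cinner a c + cnj s * cinner a d + s * cinner b c + s * cnj s * cinner (b::'a::complex_inner) d"
  by (simp add: cinner_add_left cinner_add_right cinner_scaleC_left cinner_scaleC_right algebra_simps)

lemma norm_scaleC: "norm (scaleC c (x::'a::complex_inner)) = cmod c * norm x"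
proof -
  have "cinner (scaleC c x) (scaleC c x) = (c * cnj c) * cinner x x"
    by (simp add: cinner_scaleC_left cinner_scaleC_right algebra_simps)
  also have "c * cnj c = complex_of_real ((cmod c)^2)" by (rule complex_norm_square[symmetric])
  finally have "complex_of_real (norm (scaleC c x) ^ 2) = complex_of_real ((cmod c)^2) * complex_of_real (norm x ^ 2)"
    by (simp only: cinner_self)
  hence "complex_of_real (norm (scaleC c x) ^ 2) = complex_of_real ((cmod c * norm x)^2)"
    by (simp only: of_real_mult[symmetric] power_mult_distrib)
  hence "norm (scaleC c x) ^ 2 = (cmod c * norm x)^2" by (simp only: of_real_eq_iff)
  then show ?thesis by (simp add: power2_eq_iff_nonneg)
qed

lemma CS: "cmod (cinner x y) \<le> norm x * norm (y::'a::complex_inner)"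
proof (cases "cinner x y = 0")
  case True then show ?thesis by simp
next
  case False
  define g where "g = cinner x y"
  have x0: "x \<noteq> 0" and y0: "y \<noteq> 0" using False by auto
  hence nx: "norm x > 0" and ny: "norm y > 0" by auto
  define t where "t = norm x / norm y"
  define a where "a = - (complex_of_real t * (g / complex_of_real (cmod g)))"
  have gne: "g \<noteq> 0" using False g_def by simp
  have gg: "g * cnj g = complex_of_real (cmod g) * complex_of_real (cmod g)"
    by (simp only: complex_norm_square[symmetric] power2_eq_square of_real_mult)
  have e1: "cnj a * g = - complex_of_real (t * cmod g)"
    using gne by (simp add: a_def field_simps gg)
  have e2: "a * cnj a = complex_of_real (t^2)"
    using gne by (simp add: a_def field_simps gg power2_eq_square)
  have cyx: "cinner y x = cnj g" unfolding g_def by (rule cinner_commute)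
  have e3: "a * cnj g = - complex_of_real (t * cmod g)"
    using arg_cong[OF e1, of cnj] by simp
  have "cinner (x + scaleC a y) (x + scaleC a y) =
      cinner x x + cnj a * g + a * cnj g + a * cnj a * cinner y y"
    by (simp only: expand2 g_def cyx)
  also have "\<dots> = complex_of_real (norm x ^2 - 2 * t * cmod g + t^2 * norm y ^2)"
    by (simp only: e1 e2 e3 cinner_self of_real_add of_real_diff of_real_mult) simp
  finally have "0 \<le> norm x ^2 - 2 * t * cmod g + t^2 * norm y ^2"
    using cinner_self_real_nonneg[of "x + scaleC a y"] by simp
  also have "t^2 * norm y ^2 = norm x ^ 2" using ny by (simp add: t_def power_divide)
  finally have "t * cmod g \<le> norm x ^ 2" by simp
  hence "norm x / norm y * cmod g \<le> norm x * norm x" by (simp add: t_def power2_eq_square)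
  hence "cmod g \<le> norm x * norm y" using nx ny by (simp add: field_simps)
  then show ?thesis by (simp add: g_def)
qed



lemma unit_rot: fixes k :: complex assumes "k \<noteq> 0"
  shows "\<exists>\<sigma>. cmod \<sigma> = 1 \<and> \<sigma> * k = complex_of_real (cmod k)"
proof (intro exI conjI)
  have kk: "k * cnj k = complex_of_real (cmod k) * complex_of_real (cmod k)"
    by (simp only: complex_norm_square[symmetric] power2_eq_square of_real_mult)
  show "cmod (cnj k / complex_of_real (cmod k)) = 1" using assms by (simp add: norm_divide)
  show "cnj k / complex_of_real (cmod k) * k = complex_of_real (cmod k)"
    using assms by (simp add: kk field_simps)
qed

lemma Im_lin: "Im (cnj s * c + s * d) = Im (s * (d - cnj c))"
  by (simp add: algebra_simps)

lemma Re_lin: "Re (cnj s * c + s * d) = Re (s * (cnj c + d))"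
  by (simp add: algebra_simps)

lemma s_cnj: assumes "cmod \<sigma> = 1" shows "(complex_of_real t * \<sigma>) * cnj (complex_of_real t * \<sigma>) = complex_of_real (t^2)"
proof -
  have "\<sigma> * cnj \<sigma> = 1" by (simp only: complex_norm_square[symmetric] assms) simp
  then show ?thesis by (simp add: power2_eq_square algebra_simps)
qed

lemma step1:
  fixes z0 c d Q :: complex
  assumes pos: "\<forall>s. 0 \<le> Im (z0 + cnj s * c + s * d + s * cnj s * Q)"
    and "Im z0 \<le> e" "cmod Q \<le> C2" "0 < e"
  shows "cmod (d - cnj c) \<le> sqrt e * (1 + C2)"
proof (cases "d - cnj c = 0")
  case True then show ?thesis using assms by (simp add: order_trans[OF norm_ge_zero])
next
  case False
  define k where "k = d - cnj c"
  obtain \<sigma>0 where s0: "cmod \<sigma>0 = 1" "\<sigma>0 * k = complex_of_real (cmod k)"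
    using unit_rot[of k] False k_def by auto
  define \<sigma> where "\<sigma> = - \<i> * \<sigma>0"
  have sig1: "cmod \<sigma> = 1" using s0 by (simp add: \<sigma>_def norm_mult)
  define t where "t = sqrt e"
  have t0: "t > 0" using assms by (simp add: t_def)
  have tt: "t^2 = e" using assms by (simp add: t_def)
  define s where "s = complex_of_real t * \<sigma>"
  have "Im (cnj s * c + s * d) = Im (s * k)" by (simp only: Im_lin k_def)
  also have "s * k = - \<i> * complex_of_real (t * cmod k)"
    using s0 by (simp add: s_def \<sigma>_def algebra_simps)
  finally have i1: "Im (cnj s * c + s * d) = - t * cmod k" by simp
  have i2: "Im (s * cnj s * Q) = t^2 * Im Q"
    using s_cnj[OF sig1, of t] by (simp add: s_def)
  have "Im Q \<le> C2" using assms(3) abs_Im_le_cmod[of Q] by linarith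
  hence i3: "t^2 * Im Q \<le> t^2 * C2" using t0 by (simp add: mult_left_mono)
  have "0 \<le> Im (z0 + cnj s * c + s * d + s * cnj s * Q)" using pos by blast
  also have "\<dots> = Im z0 + Im (cnj s * c + s * d) + Im (s * cnj s * Q)" by simp
  finally have "0 \<le> e - t * cmod k + t^2 * C2" using i1 i2 i3 assms(2) by linarith
  hence "t * cmod k \<le> t * (t * (1 + C2))" using tt by (simp add: power2_eq_square algebra_simps)
  hence "cmod k \<le> t * (1 + C2)" using t0 by simp
  then show ?thesis by (simp add: k_def t_def)
qed



lemma step2:
  fixes z0 c d Q :: complex and e C t \<delta> a0 M :: real
  assumes z0: "0 < Re z0" "Im z0 \<le> e" "cmod z0 \<le> e"
    and cd: "cmod c \<le> C" "cmod d \<le> C" "cmod Q \<le> C*C"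
    and kb: "cmod (d - cnj c) \<le> sqrt e * (1 + C*C)"
    and C1: "1 \<le> C" and e0: "0 < e" and tdef: "t = sqrt (sqrt e)" and t1: "t < 1"
    and tC: "t*C \<le> 1/2" and tCC: "t*(C*C) \<le> \<delta>/2" and ta: "t*(1+2*C+C*C) < a0/4"
    and d0: "0 < \<delta>" and hd: "\<delta> \<le> cmod (cnj c + d)" and Mdef: "M = 32*(1+C*C)/\<delta>^2"
    and K: "\<forall>s. cmod s * C \<le> 1/2 \<longrightarrow> 0 < Re (z0 + cnj s * c + s*d + s*cnj s*Q) \<longrightarrow>
       cmod (z0 + cnj s * c + s*d + s*cnj s*Q) < a0 * (1 - cmod s*C)^2 \<longrightarrow>
       M * (Re (z0 + cnj s * c + s*d + s*cnj s*Q))^2 < Im (z0 + cnj s * c + s*d + s*cnj s*Q) * (1 + cmod s * C)^2"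
  shows False
proof -
  define h where "h = cnj c + d"
  define k where "k = d - cnj c"
  have h0: "h \<noteq> 0" using hd d0 h_def by auto
  obtain \<sigma> where sg: "cmod \<sigma> = 1" "\<sigma> * h = complex_of_real (cmod h)"
    using unit_rot[OF h0] by auto
  have t0: "0 < t" using e0 tdef by simp
  have t2: "t^2 = sqrt e" using e0 tdef by simp
  have "sqrt e * sqrt e = e" using e0 by simp
  hence t4: "e = t^2 * t^2" using t2 by simp
  define s where "s = complex_of_real t * \<sigma>"
  have cs: "cmod s = t" using sg t0 by (simp add: s_def norm_mult)
  define L where "L = cnj s * c + s * d"
  define P where "P = s * cnj s * Q"
  have ReL: "Re L = t * cmod h"
  proof -
    have "Re L = Re (s * h)" by (simp only: L_def Re_lin h_def)
    also have "s * h = complex_of_real (t * cmod h)" using sg by (simp add: s_def mult.assoc)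
    finally show ?thesis by simp
  qed
  have ImL: "Im L \<le> t * (t^2 * (1 + C*C))"
  proof -
    have "Im L = Im (s * k)" by (simp only: L_def Im_lin k_def)
    also have "\<dots> \<le> cmod (s * k)" using abs_Im_le_cmod[of "s * k"] by linarith
    also have "\<dots> = t * cmod k" by (simp add: norm_mult cs)
    also have "\<dots> \<le> t * (t^2 * (1 + C*C))" using kb t0 t2 by (simp add: k_def)
    finally show ?thesis .
  qed
  have cmL: "cmod L \<le> 2 * t * C"
  proof -
    have "cmod L \<le> cmod (cnj s * c) + cmod (s * d)" unfolding L_def by (rule norm_triangle_ineq)
    also have "\<dots> = t * cmod c + t * cmod d" by (simp add: norm_mult cs)
    also have "\<dots> \<le> t * C + t * C" using cd t0 by (intro add_mono mult_left_mono) auto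
    finally show ?thesis by (simp add: algebra_simps)
  qed
  have Peq: "P = complex_of_real (t^2) * Q" using s_cnj[OF sg(1), of t] by (simp add: P_def s_def)
  have tC2: "t^2 * (C*C) \<le> t * (\<delta>/2)" using tCC t0 by (simp add: power2_eq_square mult.assoc mult_left_mono)
  have cmP: "cmod P \<le> t^2 * (C*C)" using cd(3) t0 unfolding Peq norm_mult norm_of_real by (simp add: mult_left_mono)
  have ReP: "- (t^2 * (C*C)) \<le> Re P" using cmP abs_Re_le_cmod[of P] by linarith
  have ImP: "Im P \<le> t^2 * (C*C)" using cmP abs_Im_le_cmod[of P] by linarith
  define Z where "Z = z0 + cnj s * c + s*d + s*cnj s*Q"
  have Zeq: "Z = z0 + L + P" by (simp add: Z_def L_def P_def)
  have hdt: "t * \<delta> \<le> t * cmod h" using hd t0 by (simp add: h_def)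
  have ReZ: "t * (\<delta>/2) \<le> Re Z" using ReL ReP tC2 hdt z0(1) by (simp add: Zeq) 
  have "0 < t * (\<delta>/2)" using t0 d0 by simp
  hence ReZ0: "0 < Re Z" using ReZ by linarith
  have ImZ: "Im Z \<le> t^2 * (2 + 2*(C*C))"
  proof -
    have "Im Z \<le> e + t * (t^2 * (1 + C*C)) + t^2 * (C*C)" using z0(2) ImL ImP by (simp add: Zeq)
    also have "\<dots> = t^2 * (t^2 + t * (1 + C*C) + C*C)" using t4 by (simp add: algebra_simps power2_eq_square)
    also have "\<dots> \<le> t^2 * (2 + 2*(C*C))"
    proof (rule mult_left_mono)
      have "t^2 \<le> 1" using t0 t1 by (simp add: power_le_one)
      moreover have "t * (1 + C*C) \<le> 1 + C*C" using t0 t1 by (simp add: mult_left_le_one_le)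
      ultimately show "t^2 + t * (1 + C*C) + C*C \<le> 2 + 2*(C*C)" by linarith
    qed simp
    finally show ?thesis .
  qed
  have "0 \<le> C*C" by simp
  hence "0 < 1+2*C+C*C" using C1 by linarith
  hence "0 < t*(1+2*C+C*C)" using t0 by (rule mult_pos_pos[rotated])
  hence a0: "0 < a0" using ta by linarith
  have cmZ: "cmod Z < a0 * (1 - cmod s * C)^2"
  proof -
    have n1: "cmod (z0 + L + P) \<le> cmod (z0 + L) + cmod P" by (rule norm_triangle_ineq)
    have n2: "cmod (z0 + L) \<le> cmod z0 + cmod L" by (rule norm_triangle_ineq)
    have "cmod Z \<le> cmod z0 + cmod L + cmod P" unfolding Zeq using n1 n2 by linarith
    also have "\<dots> \<le> e + 2*t*C + t^2*(C*C)" using z0(3) cmL cmP by linarith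
    also have "\<dots> \<le> t + 2*t*C + t*(C*C)"
    proof -
      have tt: "t^2 \<le> t" using t0 t1 by (simp add: power2_eq_square mult_left_le_one_le)
      have t21: "t^2 \<le> 1" using t0 t1 by (simp add: power_le_one)
      have "t^2 * t^2 \<le> t^2 * 1" using t21 by (intro mult_left_mono) auto
      hence "e \<le> t" using t4 tt by linarith
      moreover have "t^2*(C*C) \<le> t*(C*C)" using tt by (simp add: mult_right_mono)
      ultimately show ?thesis by linarith
    qed
    also have "\<dots> < a0/4" using ta by (simp add: algebra_simps)
    also have "a0/4 \<le> a0 * (1 - cmod s * C)^2"
    proof -
      have "1/2 \<le> 1 - cmod s * C" using tC cs by simp
      hence "(1/2)^2 \<le> (1 - cmod s * C)^2" by (rule power_mono) simp
      hence le: "a0 * (1/2)^2 \<le> a0 * (1 - cmod s * C)^2" using a0 by (intro mult_left_mono) auto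
      have eq: "a0/4 = a0 * (1/2)^2" by (simp add: power2_eq_square)
      show ?thesis unfolding eq by (rule le)
    qed
    finally show ?thesis .
  qed
  have "M * (Re Z)^2 < Im Z * (1 + cmod s * C)^2"
    using K cs tC ReZ0 cmZ unfolding Z_def by auto
  also have "\<dots> \<le> t^2 * (2 + 2*(C*C)) * (9/4)"
  proof (cases "Im Z \<le> 0")
    case True
    then have "Im Z * (1 + cmod s * C)^2 \<le> 0" by (simp add: mult_nonpos_nonneg)
    moreover have "0 \<le> t^2 * (2 + 2*(C*C)) * (9/4)" by simp
    ultimately show ?thesis by linarith
  next
    case False
    have "(1 + cmod s * C)^2 \<le> (3/2)^2" using tC cs t0 C1 by (intro power_mono) auto
    moreover have "(3/2::real)^2 = 9/4" by (simp add: power2_eq_square)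
    ultimately have p94: "(1 + cmod s * C)^2 \<le> 9/4" by linarith
    have "Im Z * (1 + cmod s * C)^2 \<le> Im Z * (9/4)" using False p94 by (intro mult_left_mono) auto
    also have "\<dots> \<le> t^2 * (2 + 2*(C*C)) * (9/4)" using ImZ by simp
    finally show ?thesis .
  qed
  finally have lt: "M * (Re Z)^2 < t^2 * (2 + 2*(C*C)) * (9/4)" .
  have "M * (t * (\<delta>/2))^2 \<le> M * (Re Z)^2"
  proof (rule mult_left_mono)
    show "(t * (\<delta>/2))^2 \<le> (Re Z)^2" using ReZ t0 d0 by (intro power_mono) auto
    show "0 \<le> M" using Mdef C1 by simp
  qed
  also have "M * (t * (\<delta>/2))^2 = 8 * t^2 * (1 + C*C)" using d0 by (simp add: Mdef power2_eq_square field_simps)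
  finally have "8 * t^2 * (1 + C*C) < t^2 * (2 + 2*(C*C)) * (9/4)" using lt by linarith
  moreover have "0 < t^2 * (1 + C*C)" using t0 by (simp add: add_pos_nonneg)
  ultimately show False by (simp add: algebra_simps)
qed



lemma dense_zero:
  assumes "closure D = UNIV" "\<forall>x\<in>D. cinner x z = 0"
  shows "z = (0::'a::complex_inner)"
proof (rule ccontr)
  assume "z \<noteq> 0" hence nz: "norm z > 0" by simp
  have "z \<in> closure D" using assms by simp
  then obtain x where x: "x \<in> D" "dist x z < norm z / 2"
    using nz unfolding closure_approachable by (meson half_gt_zero)
  have "cinner z z = cinner (z - x) z" using assms x by (simp add: cinner_diff_left)
  moreover have "cmod (cinner z z) = norm z ^ 2" by (simp add: cinner_self norm_power)
  ultimately have "norm z ^ 2 = cmod (cinner (z - x) z)" by simp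
  also have "\<dots> \<le> norm (z - x) * norm z" by (rule CS)
  also have "\<dots> \<le> (norm z / 2) * norm z" using x by (intro mult_right_mono) (auto simp: dist_norm norm_minus_commute)
  finally show False using nz mult_pos_pos[OF nz nz] by (simp add: power2_eq_square)
qed

lemma adj_prop:
  assumes "closure D = UNIV" "y \<in> adj_dom D A"
  shows "\<forall>x\<in>D. cinner (A x) y = cinner x (adj D A y)"
proof -
  obtain z where z: "\<forall>x\<in>D. cinner (A x) y = cinner x z" using assms(2) unfolding adj_dom_def by blast
  have uniq: "z' = z" if "\<forall>x\<in>D. cinner (A x) y = cinner x z'" for z'
  proof -
    have "\<forall>x\<in>D. cinner x (z' - z) = 0" using that z by (simp add: cinner_diff_right)
    hence "z' - z = 0" by (rule dense_zero[OF assms(1)])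
    then show ?thesis by simp
  qed
  have "adj D A y = z" unfolding adj_def by (rule the_equality[where P="\<lambda>z. \<forall>x\<in>D. cinner (A x) y = cinner x z", OF z uniq])
  then show ?thesis using z by simp
qed

lemma sub_scale: "is_subspace D \<Longrightarrow> x \<in> D \<Longrightarrow> scaleC c x \<in> D"
  unfolding is_subspace_def by blast
lemma sub_add: "is_subspace D \<Longrightarrow> x \<in> D \<Longrightarrow> y \<in> D \<Longrightarrow> x + y \<in> D"
  unfolding is_subspace_def by blast

lemma expand_w:
  assumes sub: "is_subspace D" and lin: "linear_on D A" and "uu \<in> D" "ff \<in> D"
  shows "cinner (A (uu + scaleC s ff)) (uu + scaleC s ff) = cinner (A uu) uu + cnj s * cinner (A uu) ff
     + s * cinner (A ff) uu + s * cnj s * cinner (A ff) (ff::'a::complex_inner)"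
proof -
  have "A (uu + scaleC s ff) = A uu + scaleC s (A ff)"
    using lin assms sub_scale[OF sub] unfolding linear_on_def by simp
  then show ?thesis by (simp add: expand2)
qed

lemma scl:
  assumes sub: "is_subspace D" and lin: "linear_on D A" and "w \<in> D" "w \<noteq> (0::'a::complex_inner)"
  shows "\<exists>v. v \<in> D \<and> norm v = 1 \<and> cinner (A v) v = complex_of_real (1 / (norm w)^2) * cinner (A w) w"
proof (intro exI conjI)
  define r where "r = complex_of_real (1 / norm w)"
  show "scaleC r w \<in> D" using sub_scale[OF sub] assms by simp
  show "norm (scaleC r w) = 1" using assms by (simp add: norm_scaleC r_def norm_divide)
  have "A (scaleC r w) = scaleC r (A w)" using lin assms unfolding linear_on_def by simp
  then show "cinner (A (scaleC r w)) (scaleC r w) = complex_of_real (1 / (norm w)^2) * cinner (A w) w"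
    by (simp add: cinner_scaleC_left cinner_scaleC_right r_def power2_eq_square)
qed

lemma Kev:
  fixes D :: "'a::chilbert_space set" and A :: "'a \<Rightarrow> 'a"
  assumes K_infty: "\<And>a :: nat \<Rightarrow> real. (\<forall>n. a n > 0) \<Longrightarrow> a \<longlonglongrightarrow> 0 \<Longrightarrow>
                    ((\<lambda>n. Kfun D A (a n)) \<longlongrightarrow> \<infinity>) sequentially"
  shows "\<exists>a0>0. \<forall>v. v \<in> D \<and> norm v = 1 \<and> 0 < cmod (cinner (A v) v) \<and> cmod (cinner (A v) v) < a0
      \<and> Re (cinner (A v) v) > 0 \<longrightarrow> M < Im (cinner (A v) v) / (Re (cinner (A v) v))^2"
proof -
    have lim: "(\<lambda>n. inverse (real (Suc n))) \<longlonglongrightarrow> 0" by (rule LIMSEQ_inverse_real_of_nat)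
    have pos: "\<forall>n. inverse (real (Suc n)) > 0" by simp
    have "((\<lambda>n. Kfun D A (inverse (real (Suc n)))) \<longlongrightarrow> \<infinity>) sequentially"
      by (rule K_infty[OF pos lim])
    hence "eventually (\<lambda>n. ereal M < Kfun D A (inverse (real (Suc n)))) sequentially"
      by (rule order_tendstoD(1)) simp
    then obtain N where N: "ereal M < Kfun D A (inverse (real (Suc N)))"
      unfolding eventually_sequentially by blast
    show ?thesis
    proof (intro exI conjI allI impI)
      show "0 < inverse (real (Suc N))" by simp
      fix v assume v: "v \<in> D \<and> norm v = 1 \<and> 0 < cmod (cinner (A v) v) \<and> cmod (cinner (A v) v) < inverse (real (Suc N))
      \<and> Re (cinner (A v) v) > 0"
      have mem: "Im (cinner (A v) v) / (Re (cinner (A v) v))^2 \<in> {Im (cinner (A v) v) / (Re (cinner (A v) v))\<^sup>2 | v.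
      v \<in> D \<and> norm v = 1 \<and> 0 < cmod (cinner (A v) v) \<and> cmod (cinner (A v) v) < inverse (real (Suc N))
      \<and> Re (cinner (A v) v) > 0}" using v by blast
      have "Kfun D A (inverse (real (Suc N))) \<le> ereal (Im (cinner (A v) v) / (Re (cinner (A v) v))^2)"
        unfolding Kfun_def by (rule Inf_lower) (rule imageI[OF mem])
      then have "ereal M < ereal (Im (cinner (A v) v) / (Re (cinner (A v) v))^2)"
        using N by (rule order_less_le_trans[rotated])
      then show "M < Im (cinner (A v) v) / (Re (cinner (A v) v))^2" by simp
    qed
qed



theorem mainTheorem7:
  fixes D :: "'a::chilbert_space set" and A :: "'a \<Rightarrow> 'a"
    and \<alpha> :: complex and \<epsilon> :: "nat \<Rightarrow> real" and u f :: "nat \<Rightarrow> 'a"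
  assumes dense: "densely_defined D A"
    and closed: "closed_operator D A"
    and dom_adj: "D \<subseteq> adj_dom D A"
    and num_upper: "Num D A \<subseteq> {z. Im z \<ge> 0}"
    and K_infty: "\<And>a :: nat \<Rightarrow> real. (\<forall>n. a n > 0) \<Longrightarrow> a \<longlonglongrightarrow> 0 \<Longrightarrow>
                    ((\<lambda>n. Kfun D A (a n)) \<longlongrightarrow> \<infinity>) sequentially"
    and alpha_num: "\<alpha> \<in> Num D A"
    and alpha_re: "0 < Re \<alpha>" "Re \<alpha> < 1"
    and alpha_im: "0 < Im \<alpha>" "Im \<alpha> < 1"
    and alpha_abs: "cmod \<alpha> < 1"
    and segment: "\<forall>t::real. 0 < t \<and> t \<le> 1 \<longrightarrow> complex_of_real t * \<alpha> \<in> Num D A"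
    and eps: "\<forall>n. 0 < \<epsilon> n \<and> \<epsilon> n < 1" "\<epsilon> \<longlonglongrightarrow> 0"
    and u: "\<forall>n. u n \<in> D \<and> norm (u n) = 1 \<and> cinner (A (u n)) (u n) = complex_of_real (\<epsilon> n) * \<alpha>"
    and f_dom: "\<forall>n. f n \<in> D"
    and f_bdd: "\<exists>C. \<forall>n. norm (f n) \<le> C \<and> norm (A (f n)) \<le> C \<and> norm (adj D A (f n)) \<le> C"
  shows "(\<lambda>n. cmod (cinner (f n) (A (u n))) + cmod (cinner (f n) (adj D A (u n)))) \<longlonglongrightarrow> 0"
proof -
  have sub: "is_subspace D" and lin: "linear_on D A" and clos: "closure D = UNIV"
    using dense unfolding densely_defined_def by auto
  obtain C0 where C0: "\<forall>n. norm (f n) \<le> C0 \<and> norm (A (f n)) \<le> C0 \<and> norm (adj D A (f n)) \<le> C0"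
    using f_bdd by blast
  define C where "C = max C0 1"
  have C1: "1 \<le> C" by (simp add: C_def)
  have fC: "norm (f n) \<le> C" "norm (A (f n)) \<le> C" "norm (adj D A (f n)) \<le> C" for n
  proof -
    have "norm (f n) \<le> C0 \<and> norm (A (f n)) \<le> C0 \<and> norm (adj D A (f n)) \<le> C0" using C0 by blast
    then show "norm (f n) \<le> C" "norm (A (f n)) \<le> C" "norm (adj D A (f n)) \<le> C" by (auto simp: C_def le_max_iff_disj)
  qed
  have uD: "u n \<in> D" and un1: "norm (u n) = 1" and uq: "cinner (A (u n)) (u n) = complex_of_real (\<epsilon> n) * \<alpha>" for n
    using u by auto
  have fD: "f n \<in> D" for n using f_dom by auto
  have adjA: "\<forall>x\<in>D. cinner (A x) y = cinner x (adj D A y)" if "y \<in> D" for y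
    using adj_prop[OF clos] dom_adj that by blast
  have Im_nonneg: "0 \<le> Im (cinner (A w) w)" if wDD: "w \<in> D" for w
  proof (cases "w = 0")
    case True then show ?thesis by simp
  next
    case False
    then obtain v where v: "v \<in> D" "norm v = 1" "cinner (A v) v = complex_of_real (1 / (norm w)^2) * cinner (A w) w"
      using scl[OF sub lin wDD] by blast
    have "cinner (A v) v \<in> Num D A" using v unfolding Num_def by blast
    hence "0 \<le> Im (cinner (A v) v)" using num_upper by auto
    hence "0 \<le> (1 / (norm w)^2) * Im (cinner (A w) w)" using v(3) by simp
    then show ?thesis using False by (simp add: zero_le_divide_iff)
  qed
  have Kev: "\<exists>a0>0. \<forall>v. v \<in> D \<and> norm v = 1 \<and> 0 < cmod (cinner (A v) v) \<and> cmod (cinner (A v) v) < a0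
      \<and> Re (cinner (A v) v) > 0 \<longrightarrow> M < Im (cinner (A v) v) / (Re (cinner (A v) v))^2" for M
    by (rule Kev[OF K_infty])
  have Khom: "\<exists>a0>0. \<forall>w. w \<in> D \<longrightarrow> w \<noteq> 0 \<longrightarrow> 0 < Re (cinner (A w) w) \<longrightarrow>
      cmod (cinner (A w) w) < a0 * (norm w)^2 \<longrightarrow>
      M * (Re (cinner (A w) w))^2 < Im (cinner (A w) w) * (norm w)^2" for M
  proof -
    obtain a0 where a0: "a0 > 0" and H: "\<forall>v. v \<in> D \<and> norm v = 1 \<and> 0 < cmod (cinner (A v) v) \<and> cmod (cinner (A v) v) < a0
      \<and> Re (cinner (A v) v) > 0 \<longrightarrow> M < Im (cinner (A v) v) / (Re (cinner (A v) v))^2"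
      using Kev[of M] by blast
    show ?thesis
    proof (intro exI conjI allI impI)
      show "0 < a0" by fact
      fix w assume w: "w \<in> D" "w \<noteq> 0" "0 < Re (cinner (A w) w)" "cmod (cinner (A w) w) < a0 * (norm w)^2"
      define z where "z = cinner (A w) w"
      define r where "r = 1 / (norm w)^2"
      have r0: "r > 0" using w by (simp add: r_def)
      obtain v where v: "v \<in> D" "norm v = 1" "cinner (A v) v = complex_of_real r * z"
        using scl[OF sub lin w(1,2)] by (auto simp: r_def z_def)
      have Rez: "0 < Re z" using w z_def by simp
      have nw: "0 < (norm w)^2" using w by simp
      have cz: "cmod (cinner (A v) v) = r * cmod z" using v(3) r0 by (simp add: norm_mult)
      have c1: "0 < cmod (cinner (A v) v)" 
      proof -
        have "z \<noteq> 0" using Rez by auto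
        hence "0 < cmod z" by simp
        hence "0 < r * cmod z" using r0 by simp
        then show ?thesis by (simp add: cz)
      qed
      have "r * cmod z < r * (a0 * (norm w)^2)" using r0 w(4) z_def by (intro mult_strict_left_mono) auto
      also have "r * (a0 * (norm w)^2) = a0" using nw by (simp add: r_def)
      finally have c2: "cmod (cinner (A v) v) < a0" using cz by simp
      have c3: "0 < Re (cinner (A v) v)" using v(3) r0 Rez by simp
      have "M < Im (cinner (A v) v) / (Re (cinner (A v) v))^2"
        using H v(1,2) c1 c2 c3 by blast
      hence "M < Im (complex_of_real r * z) / (Re (complex_of_real r * z))^2" using v(3) by simp
      hence "M < (r * Im z) / (r * Re z)^2" by simp
      also have "(r * Im z) / (r * Re z)^2 = Im z * (norm w)^2 / (Re z)^2"
        using r0 w by (simp add: r_def power2_eq_square field_simps)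
      finally have "M * (Re z)^2 < Im z * (norm w)^2" using Rez by (simp add: field_simps)
      then show "M * (Re (cinner (A w) w))^2 < Im (cinner (A w) w) * (norm w)^2" by (simp add: z_def)
    qed
  qed
  define c where "c n = cinner (A (u n)) (f n)" for n
  define d where "d n = cinner (A (f n)) (u n)" for n
  define Q where "Q n = cinner (A (f n)) (f n)" for n
  define h where "h n = cnj (c n) + d n" for n
  define k where "k n = d n - cnj (c n)" for n
  have cC: "cmod (c n) \<le> C" for n
  proof -
    have "c n = cinner (u n) (adj D A (f n))" using adjA[OF fD] uD by (simp add: c_def)
    also have "cmod \<dots> \<le> norm (u n) * norm (adj D A (f n))" by (rule CS)
    finally show ?thesis using un1 fC(3)[of n] by simp
  qed
  have dC: "cmod (d n) \<le> C" for n
    using CS[of "A (f n)" "u n"] un1 fC(2)[of n] by (simp add: d_def)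
  have QC: "cmod (Q n) \<le> C * C" for n
  proof -
    have "norm (A (f n)) * norm (f n) \<le> C * C" by (rule mult_mono[OF fC(2) fC(1)]) (use C1 in auto)
    then show ?thesis using CS[of "A (f n)" "f n"] unfolding Q_def by linarith
  qed
  have Zw: "cinner (A (u n + scaleC s (f n))) (u n + scaleC s (f n)) =
     complex_of_real (\<epsilon> n) * \<alpha> + cnj s * c n + s * d n + s * cnj s * Q n" for n s
    using expand_w[OF sub lin uD fD] uq by (simp add: c_def d_def Q_def)
  have wD: "u n + scaleC s (f n) \<in> D" for n s using sub_add[OF sub uD sub_scale[OF sub fD]] .
  have e0: "0 < \<epsilon> n" "\<epsilon> n < 1" for n using eps by auto
  have z0: "0 < Re (complex_of_real (\<epsilon> n) * \<alpha>)" "Im (complex_of_real (\<epsilon> n) * \<alpha>) \<le> \<epsilon> n"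
    "cmod (complex_of_real (\<epsilon> n) * \<alpha>) \<le> \<epsilon> n" for n
  proof -
    show "0 < Re (complex_of_real (\<epsilon> n) * \<alpha>)" using e0[of n] alpha_re by simp
    show "Im (complex_of_real (\<epsilon> n) * \<alpha>) \<le> \<epsilon> n" using e0[of n] alpha_im by (simp add: mult_left_le_one_le mult.commute)
    show "cmod (complex_of_real (\<epsilon> n) * \<alpha>) \<le> \<epsilon> n" using e0[of n] alpha_abs
      by (simp add: norm_mult mult_left_le_one_le mult.commute)
  qed
  have kb: "cmod (k n) \<le> sqrt (\<epsilon> n) * (1 + C * C)" for n
    unfolding k_def
  proof (rule step1[OF _ z0(2) QC e0(1)])
    show "\<forall>s. 0 \<le> Im (complex_of_real (\<epsilon> n) * \<alpha> + cnj s * c n + s * d n + s * cnj s * Q n)"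
    proof
      fix s
      show "0 \<le> Im (complex_of_real (\<epsilon> n) * \<alpha> + cnj s * c n + s * d n + s * cnj s * Q n)"
        using Im_nonneg[OF wD[of n s]] by (simp only: Zw)
    qed
  qed
  have sq0: "(\<lambda>n. sqrt (\<epsilon> n)) \<longlonglongrightarrow> 0" using tendsto_real_sqrt[OF eps(2)] by simp
  have klim: "(\<lambda>n. cmod (k n)) \<longlonglongrightarrow> 0"
  proof (rule Lim_null_comparison)
    show "\<forall>\<^sub>F n in sequentially. norm (cmod (k n)) \<le> sqrt (\<epsilon> n) * (1 + C * C)" using kb by simp
    show "(\<lambda>n. sqrt (\<epsilon> n) * (1 + C * C)) \<longlonglongrightarrow> 0" using tendsto_mult_left_zero[OF sq0] by simp
  qed
  have tlim: "(\<lambda>n. sqrt (sqrt (\<epsilon> n))) \<longlonglongrightarrow> 0" using tendsto_real_sqrt[OF sq0] by simp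
  have hlim: "(\<lambda>n. cmod (h n)) \<longlonglongrightarrow> 0"
  proof (rule order_tendstoI)
    fix a :: real assume "a < 0" then show "\<forall>\<^sub>F n in sequentially. a < cmod (h n)"
      by (simp add: order_less_le_trans)
  next
    fix \<delta> :: real assume d0: "0 < \<delta>"
    define M where "M = 32*(1+C*C)/\<delta>^2"
    obtain a0 where a0: "a0 > 0" and KH: "\<forall>w. w \<in> D \<longrightarrow> w \<noteq> 0 \<longrightarrow> 0 < Re (cinner (A w) w) \<longrightarrow>
      cmod (cinner (A w) w) < a0 * (norm w)^2 \<longrightarrow>
      M * (Re (cinner (A w) w))^2 < Im (cinner (A w) w) * (norm w)^2"
      using Khom[of M] by blast
    define \<eta> where "\<eta> = min (min (1/2) (1/(2*C))) (min (\<delta>/(2*(C*C))) (a0/(4*(1+2*C+C*C))))"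
    have "0 \<le> C*C" by simp
    hence pC: "0 < 1+2*C+C*C" using C1 by linarith
    have p1: "0 < (1/2::real)" by simp
    have p2: "0 < 1/(2*C)" using C1 by simp
    have p3: "0 < \<delta>/(2*(C*C))" using C1 d0 by simp
    have p4: "0 < a0/(4*(1+2*C+C*C))" using a0 pC by (intro divide_pos_pos) auto
    have \<eta>0: "0 < \<eta>" unfolding \<eta>_def min_less_iff_conj using p1 p2 p3 p4 by blast
    have \<eta>le: "\<eta> \<le> 1/2" "\<eta> \<le> 1/(2*C)" "\<eta> \<le> \<delta>/(2*(C*C))" "\<eta> \<le> a0/(4*(1+2*C+C*C))"
      unfolding \<eta>_def
      by (rule order_trans[OF min.cobounded1 min.cobounded1], rule order_trans[OF min.cobounded1 min.cobounded2],
          rule order_trans[OF min.cobounded2 min.cobounded1], rule order_trans[OF min.cobounded2 min.cobounded2])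
    have "\<forall>\<^sub>F n in sequentially. sqrt (sqrt (\<epsilon> n)) < \<eta>" using order_tendstoD(2)[OF tlim \<eta>0] .
    then show "\<forall>\<^sub>F n in sequentially. cmod (h n) < \<delta>"
    proof (rule eventually_mono)
      fix n assume tn: "sqrt (sqrt (\<epsilon> n)) < \<eta>"
      define t where "t = sqrt (sqrt (\<epsilon> n))"
      have t0: "0 \<le> t" using e0(1)[of n] by (simp add: t_def)
      have Cp: "0 < C" using C1 by simp
      have tn': "t < \<eta>" using tn by (simp add: t_def)
      have t1: "t < 1" using tn' \<eta>le(1) by linarith
      have "t < 1/(2*C)" using tn' \<eta>le(2) by linarith
      hence tC: "t*C \<le> 1/2" using Cp by (simp add: field_simps)
      have "t < \<delta>/(2*(C*C))" using tn' \<eta>le(3) by linarith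
      hence tCC: "t*(C*C) \<le> \<delta>/2" using Cp by (simp add: field_simps)
      have "t < a0/(4*(1+2*C+C*C))" using tn' \<eta>le(4) by linarith
      hence ta: "t*(1+2*C+C*C) < a0/4" using Cp by (simp add: field_simps add_pos_pos)
      show "cmod (h n) < \<delta>"
      proof (rule ccontr)
        assume "\<not> cmod (h n) < \<delta>"
        hence hd: "\<delta> \<le> cmod (cnj (c n) + d n)" by (simp add: h_def)
        show False
        proof (rule step2[OF z0[of n] cC dC QC kb[unfolded k_def] C1 e0(1) t_def t1 tC tCC ta d0 hd M_def])
          show "\<forall>s. cmod s * C \<le> 1/2 \<longrightarrow> 0 < Re (complex_of_real (\<epsilon> n) * \<alpha> + cnj s * c n + s * d n + s * cnj s * Q n) \<longrightarrow>
            cmod (complex_of_real (\<epsilon> n) * \<alpha> + cnj s * c n + s * d n + s * cnj s * Q n) < a0 * (1 - cmod s * C)^2 \<longrightarrow>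
            M * (Re (complex_of_real (\<epsilon> n) * \<alpha> + cnj s * c n + s * d n + s * cnj s * Q n))^2
              < Im (complex_of_real (\<epsilon> n) * \<alpha> + cnj s * c n + s * d n + s * cnj s * Q n) * (1 + cmod s * C)^2"
          proof (intro allI impI)
            fix s :: complex
            assume sC: "cmod s * C \<le> 1/2"
            define w where "w = u n + scaleC s (f n)"
            define Z where "Z = cinner (A w) w"
            assume R: "0 < Re (complex_of_real (\<epsilon> n) * \<alpha> + cnj s * c n + s * d n + s * cnj s * Q n)"
              and Cm: "cmod (complex_of_real (\<epsilon> n) * \<alpha> + cnj s * c n + s * d n + s * cnj s * Q n) < a0 * (1 - cmod s * C)^2"
            have ZZ: "Z = complex_of_real (\<epsilon> n) * \<alpha> + cnj s * c n + s * d n + s * cnj s * Q n"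
              using Zw by (simp add: Z_def w_def)
            have nsf: "norm (scaleC s (f n)) \<le> cmod s * C"
              using fC(1)[of n] by (simp add: norm_scaleC mult_left_mono)
            have "norm (u n) \<le> norm w + norm (scaleC s (f n))"
              using norm_triangle_ineq4[of w "scaleC s (f n)"] by (simp add: w_def)
            hence lo: "1 - cmod s * C \<le> norm w" using un1[of n] nsf by linarith
            have "norm w \<le> norm (u n) + norm (scaleC s (f n))" unfolding w_def by (rule norm_triangle_ineq)
            hence hi: "norm w \<le> 1 + cmod s * C" using un1[of n] nsf by linarith
            have lo0: "0 \<le> 1 - cmod s * C" using sC by simp
            have wne: "w \<noteq> 0" using lo sC by auto
            have "(1 - cmod s * C)^2 \<le> (norm w)^2" using lo lo0 by (rule power_mono)
            hence "a0 * (1 - cmod s * C)^2 \<le> a0 * (norm w)^2" using a0 by (simp add: mult_left_mono)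
            hence Cm': "cmod Z < a0 * (norm w)^2" using Cm ZZ by simp
            have "M * (Re Z)^2 < Im Z * (norm w)^2"
              using KH[rule_format, OF wD[of n s, folded w_def] wne] R Cm' ZZ by (simp add: Z_def)
            also have "\<dots> \<le> Im Z * (1 + cmod s * C)^2"
            proof (rule mult_left_mono)
              show "(norm w)^2 \<le> (1 + cmod s * C)^2" using hi by (intro power_mono) auto
              show "0 \<le> Im Z" using Im_nonneg[OF wD[of n s]] by (simp add: Z_def w_def)
            qed
            finally show "M * (Re (complex_of_real (\<epsilon> n) * \<alpha> + cnj s * c n + s * d n + s * cnj s * Q n))^2
              < Im (complex_of_real (\<epsilon> n) * \<alpha> + cnj s * c n + s * d n + s * cnj s * Q n) * (1 + cmod s * C)^2"
              using ZZ by simp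
          qed
        qed
      qed
    qed
  qed
  have bound: "norm (cmod (cinner (f n) (A (u n))) + cmod (cinner (f n) (adj D A (u n)))) \<le> cmod (h n) + cmod (k n)" for n
  proof -
    have e1: "cmod (cinner (f n) (A (u n))) = cmod (c n)" 
    proof -
      have "cinner (f n) (A (u n)) = cnj (c n)" unfolding c_def by (rule cinner_commute)
      then show ?thesis by simp
    qed
    have e2: "cinner (f n) (adj D A (u n)) = d n" using adjA[OF uD] fD by (simp add: d_def)
    have c2: "cnj (c n) = (h n - k n) / 2" "d n = (h n + k n) / 2" by (simp_all add: h_def k_def field_simps)
    have "cmod (c n) = cmod (cnj (c n))" by simp
    also have "\<dots> = cmod ((h n - k n) / 2)" by (simp only: c2(1))
    finally have "cmod (c n) = cmod ((h n - k n) / 2)" .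
    also have "\<dots> \<le> (cmod (h n) + cmod (k n)) / 2" by (simp add: norm_divide norm_triangle_ineq4)
    finally have a: "cmod (c n) \<le> (cmod (h n) + cmod (k n)) / 2" .
    have b: "cmod (d n) \<le> (cmod (h n) + cmod (k n)) / 2" by (simp add: c2(2) norm_divide norm_triangle_ineq)
    show ?thesis using a b e1 e2 by simp
  qed
  show ?thesis
  proof (rule Lim_null_comparison)
    show "\<forall>\<^sub>F n in sequentially. norm (cmod (cinner (f n) (A (u n))) + cmod (cinner (f n) (adj D A (u n)))) \<le> cmod (h n) + cmod (k n)"
      using bound by simp
    show "(\<lambda>n. cmod (h n) + cmod (k n)) \<longlonglongrightarrow> 0" using tendsto_add_zero[OF hlim klim] .
  qed
qed


end
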